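(* Let $X$ be a continuous vector field on $\mathbb{S}^1$ with support function $\phi_X$, and let $\eta\in\mathbb{D}^2$. Then $\mathcal{E}_X^-$ (resp. $\mathcal{E}_X^+$) is continuous at $\eta$ if and only if $\Sigma^-(\eta)$ (resp. $\Sigma^+(\eta)$) consists of a single point, i.e. there is a unique support plane of $\mathrm{epi}^+(\phi_X^-)$ at $(\eta,\phi_X^-(\eta))$ (resp. of $\mathrm{epi}^-(\phi_X^+)$ at $(\eta,\phi_X^+(\eta))$).
   Context: $\mathbb{R}^{1,2}$ is $\mathbb{R}^3$ with $\langle x,y\rangle=-x_0y_0+x_1y_1+x_2y_2$; $\Pi(x_0,x_1,x_2)=(x_1/x_0,x_2/x_0)$; $\mathbb{D}^2$ is the open unit disk with boundary $\mathbb{S}^1$. Minkowski cross product: $\langle x\boxtimes y,v\rangle=\det(x,y,v)$. A vector field $X$ on $\mathbb{S}^1$ is $X(z)=iz\phi_X(z)$. $\phi_X^-(\eta)=\sup\{a(\eta):a\text{ affine},a|_{\mathbb{S}^1}\le\phi_X\}$, $\phi_X^+(\eta)=\inf\{a(\eta):a\text{ affine},a|_{\mathbb{S}^1}\ge\phi_X\}$; $\mathrm{epi}^+(\phi_X^-)=\{(\eta,t):t\ge\phi_X^-(\eta)\}$, $\mathrm{epi}^-(\phi_X^+)=\{(\eta,t):t\le\phi_X^+(\eta)\}$. Support planes at points over $\mathbb{D}^2$ are the planes $t=\langle(1,\xi),\sigma\rangle$ with $\sigma\in\Sigma^\pm(\eta)$, where $\Sigma^-(\eta)$ is the set of $\sigma\in\mathbb{R}^{1,2}$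 with $\langle(1,\xi),\sigma\rangle\le\phi_X^-(\xi)$ for all $\xi\in\mathbb{D}^2$ and equality at $\xi=\eta$, and $\Sigma^+(\eta)$ likewise with $\ge\phi_X^+$; each is a point or a compact segment. $\mathcal{E}_X^\pm(\eta)=\mathrm{d}_{(1,\eta)}\Pi((1,\eta)\boxtimes\sigma^\pm(\eta))$ with $\sigma^\pm(\eta)$ the point or midpoint of $\Sigma^\pm(\eta)$. *)

theory Defs
  imports "HOL-Analysis.Analysis"
begin

text \<open>Points of R^{1,2} are triples (x0, x1, x2) :: real \<times> real \<times> real;
  points of R^2 (the plane of D^2 and S^1) are complex numbers.\<close>

type_synonym mink = "real \<times> real \<times> real"

definition mink_inner :: "mink \<Rightarrow> mink \<Rightarrow> real" where
  "mink_inner x y = - fst x * fst y + fst (snd x) * fst (snd y) + snd (snd x) * snd (snd y)"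

definition det3 :: "mink \<Rightarrow> mink \<Rightarrow> mink \<Rightarrow> real" where
  "det3 x y v =
     fst x * (fst (snd y) * snd (snd v) - snd (snd y) * fst (snd v))
   - fst (snd x) * (fst y * snd (snd v) - snd (snd y) * fst v)
   + snd (snd x) * (fst y * fst (snd v) - fst (snd y) * fst v)"

definition mink_cross :: "mink \<Rightarrow> mink \<Rightarrow> mink" where
  "mink_cross x y = (THE w. \<forall>v. mink_inner w v = det3 x y v)"

definition Pi_proj :: "mink \<Rightarrow> complex" where
  "Pi_proj x = Complex (fst (snd x) / fst x) (snd (snd x) / fst x)"

definition lift :: "complex \<Rightarrow> mink" where
  "lift \<xi> = (1, Re \<xi>, Im \<xi>)"

text \<open>Vector field on S^1: X(z) = i z phi_X(z) with phi_X real-valued.\<close>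
definition support_fn :: "(complex \<Rightarrow> complex) \<Rightarrow> complex \<Rightarrow> real" where
  "support_fn X z = Re (X z / (\<i> * z))"

definition is_vector_field_S1 :: "(complex \<Rightarrow> complex) \<Rightarrow> bool" where
  "is_vector_field_S1 X \<longleftrightarrow>
     (\<forall>z\<in>sphere 0 1. X z = \<i> * z * complex_of_real (support_fn X z))"

definition phi_minus :: "(complex \<Rightarrow> real) \<Rightarrow> complex \<Rightarrow> real" where
  "phi_minus \<phi> \<eta> = Sup {c + b1 * Re \<eta> + b2 * Im \<eta> | c b1 b2.
       \<forall>z\<in>sphere 0 1. c + b1 * Re z + b2 * Im z \<le> \<phi> z}"

definition phi_plus :: "(complex \<Rightarrow> real) \<Rightarrow> complex \<Rightarrow> real" where
  "phi_plus \<phi> \<eta> = Inf {c + b1 * Re \<eta> + b2 * Im \<eta> | c b1 b2.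
       \<forall>z\<in>sphere 0 1. c + b1 * Re z + b2 * Im z \<ge> \<phi> z}"

definition Sigma_minus :: "(complex \<Rightarrow> complex) \<Rightarrow> complex \<Rightarrow> mink set" where
  "Sigma_minus X \<eta> = {\<sigma>. (\<forall>\<xi>\<in>ball 0 1. mink_inner (lift \<xi>) \<sigma> \<le> phi_minus (support_fn X) \<xi>)
       \<and> mink_inner (lift \<eta>) \<sigma> = phi_minus (support_fn X) \<eta>}"

definition Sigma_plus :: "(complex \<Rightarrow> complex) \<Rightarrow> complex \<Rightarrow> mink set" where
  "Sigma_plus X \<eta> = {\<sigma>. (\<forall>\<xi>\<in>ball 0 1. mink_inner (lift \<xi>) \<sigma> \<ge> phi_plus (support_fn X) \<xi>)
       \<and> mink_inner (lift \<eta>) \<sigma> = phi_plus (support_fn X) \<eta>}"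

text \<open>The point of a singleton, or the midpoint of a compact segment.\<close>
definition seg_mid :: "mink set \<Rightarrow> mink" where
  "seg_mid S = (THE m. \<exists>a b. S = closed_segment a b \<and> m = midpoint a b)"

definition E_field :: "mink \<Rightarrow> complex \<Rightarrow> complex" where
  "E_field \<sigma> \<eta> = frechet_derivative Pi_proj (at (lift \<eta>)) (mink_cross (lift \<eta>) \<sigma>)"

definition E_minus :: "(complex \<Rightarrow> complex) \<Rightarrow> complex \<Rightarrow> complex" where
  "E_minus X \<eta> = E_field (seg_mid (Sigma_minus X \<eta>)) \<eta>"

definition E_plus :: "(complex \<Rightarrow> complex) \<Rightarrow> complex \<Rightarrow> complex" where
  "E_plus X \<eta> = E_field (seg_mid (Sigma_plus X \<eta>)) \<eta>"

end

theory Submission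
  imports Defs
begin


definition Aff :: "mink \<Rightarrow> complex \<Rightarrow> real" where
  "Aff \<sigma> \<xi> = - fst \<sigma> + fst (snd \<sigma>) * Re \<xi> + snd (snd \<sigma>) * Im \<xi>"

lemma mink_inner_lift: "mink_inner (lift \<xi>) \<sigma> = Aff \<sigma> \<xi>"
  by (simp add: mink_inner_def lift_def Aff_def)

lemma mink_cross_eq:
  "mink_cross x y = (snd (snd x) * fst (snd y) - fst (snd x) * snd (snd y),
                     snd (snd x) * fst y - fst x * snd (snd y),
                     fst x * fst (snd y) - fst (snd x) * fst y)"
  unfolding mink_cross_def
proof (rule the_equality)
  show "\<forall>v. mink_inner (snd (snd x) * fst (snd y) - fst (snd x) * snd (snd y),
                     snd (snd x) * fst y - fst x * snd (snd y),
                     fst x * fst (snd y) - fst (snd x) * fst y) v = det3 x y v"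
    by (simp add: mink_inner_def det3_def algebra_simps)
next
  fix w assume h: "\<forall>v. mink_inner w v = det3 x y v"
  have 1: "mink_inner w (1,0,0) = det3 x y (1,0,0)" using h by blast
  have 2: "mink_inner w (0,1,0) = det3 x y (0,1,0)" using h by blast
  have 3: "mink_inner w (0,0,1) = det3 x y (0,0,1)" using h by blast
  show "w = (snd (snd x) * fst (snd y) - fst (snd x) * snd (snd y),
                     snd (snd x) * fst y - fst x * snd (snd y),
                     fst x * fst (snd y) - fst (snd x) * fst y)"
    using 1 2 3 by (cases w) (auto simp: mink_inner_def det3_def algebra_simps)
qed

lemma Pi_proj_deriv:
  "(Pi_proj has_derivative (\<lambda>h. Complex (fst (snd h) - a * fst h) (snd (snd h) - b * fst h)))
     (at (1, a, b))"
proof -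
  have eq: "Pi_proj = (\<lambda>x. complex_of_real (fst (snd x) / fst x) + \<i> * complex_of_real (snd (snd x) / fst x))"
    by (auto simp: Pi_proj_def fun_eq_iff complex_eq_iff)
  have "((\<lambda>x. complex_of_real (fst (snd x) / fst x) + \<i> * complex_of_real (snd (snd x) / fst x)) has_derivative
     (\<lambda>h. complex_of_real (- (a / 1) * (inverse 1 * fst h) + fst (snd h) / 1) +
          \<i> * complex_of_real (- (b / 1) * (inverse 1 * fst h) + snd (snd h) / 1))) (at (1, a, b))"
    by (intro derivative_eq_intros) auto
  moreover have "(\<lambda>h. complex_of_real (- (a / 1) * (inverse 1 * fst h) + fst (snd h) / 1) +
          \<i> * complex_of_real (- (b / 1) * (inverse 1 * fst h) + snd (snd h) / 1)) =
     (\<lambda>h. Complex (fst (snd h) - a * fst h) (snd (snd h) - b * fst h))"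
    by (auto simp: fun_eq_iff complex_eq_iff)
  ultimately show ?thesis using eq by simp
qed

definition EF :: "mink \<Rightarrow> complex \<Rightarrow> complex" where
  "EF \<sigma> \<eta> = (let a = Re \<eta>; b = Im \<eta>; s0 = fst \<sigma>; s1 = fst (snd \<sigma>); s2 = snd (snd \<sigma>);
      w0 = b * s1 - a * s2; w1 = b * s0 - s2; w2 = s1 - a * s0
     in Complex (w1 - a * w0) (w2 - b * w0))"

lemma E_field_eq: "E_field \<sigma> \<eta> = EF \<sigma> \<eta>"
proof -
  have "lift \<eta> = (1, Re \<eta>, Im \<eta>)" by (simp add: lift_def)
  then show ?thesis
    unfolding E_field_def
    using frechet_derivative_at[OF Pi_proj_deriv[of "Re \<eta>" "Im \<eta>"], symmetric]
    by (simp add: mink_cross_eq EF_def Let_def)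
qed



lemma EF_diff: "EF (a - b) \<eta> = EF a \<eta> - EF b \<eta>"
  by (simp add: EF_def Let_def complex_eq_iff algebra_simps)

lemma EF_neg: "EF (- a) \<eta> = - EF a \<eta>"
  by (simp add: EF_def Let_def complex_eq_iff algebra_simps)

lemma EF_inj:
  assumes "Aff v \<eta> = 0" "EF v \<eta> = 0" "cmod \<eta> < 1"
  shows "v = 0"
proof -
  obtain s0 s1 s2 where v: "v = (s0, s1, s2)" by (cases v) auto
  define a where "a = Re \<eta>"
  define b where "b = Im \<eta>"
  define w0 where "w0 = b * s1 - a * s2"
  have "EF v \<eta> = Complex ((b * s0 - s2) - a * w0) ((s1 - a * s0) - b * w0)"
    by (simp add: EF_def Let_def v a_def b_def w0_def)
  then have e1: "(b * s0 - s2) - a * w0 = 0" and e2: "(s1 - a * s0) - b * w0 = 0"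
    using assms(2) by (simp_all add: Complex_eq_0)
  have e3: "- s0 + s1 * a + s2 * b = 0" using assms(1) by (simp add: Aff_def v a_def b_def)
  have s2: "s2 = b * s0 - a * w0" using e1 by simp
  have s1: "s1 = a * s0 + b * w0" using e2 by simp
  have "w0 = b * s1 - a * s2" by (simp add: w0_def)
  also have "\<dots> = b * (a * s0 + b * w0) - a * (b * s0 - a * w0)" by (simp only: s1 s2)
  also have "\<dots> = (a^2 + b^2) * w0" by (simp add: algebra_simps power2_eq_square)
  finally have "w0 = (a^2 + b^2) * w0" .
  moreover have "a^2 + b^2 < 1"
  proof -
    have "cmod \<eta> ^ 2 < 1" using assms(3) by (simp add: power_less_one_iff abs_less_iff)
    then show ?thesis by (simp add: a_def b_def cmod_power2)
  qed
  ultimately have w0: "w0 = 0"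
    by (metis mult_cancel_right1 less_irrefl)
  have "s0 * (1 - (a^2+b^2)) = 0" using e3 s1 s2 w0 by (simp add: algebra_simps power2_eq_square)
  then have "s0 = 0" using \<open>a^2+b^2<1\<close> by simp
  then show ?thesis using v s1 s2 w0 by (simp add: zero_prod_def)
qed

lemma EF_tendsto:
  assumes "g \<longlonglongrightarrow> \<sigma>" "x \<longlonglongrightarrow> \<eta>"
  shows "(\<lambda>n. EF (g n) (x n)) \<longlonglongrightarrow> EF \<sigma> \<eta>"
  unfolding EF_def Let_def
  by (intro tendsto_intros assms)

lemma Aff_tendsto:
  assumes "g \<longlonglongrightarrow> \<sigma>" "x \<longlonglongrightarrow> \<eta>"
  shows "(\<lambda>n. Aff (g n) (x n)) \<longlonglongrightarrow> Aff \<sigma> \<eta>"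
  unfolding Aff_def
  by (intro tendsto_intros assms)

lemma Aff_linear: "Aff (a + b) \<xi> = Aff a \<xi> + Aff b \<xi>" "Aff (c *\<^sub>R a) \<xi> = c * Aff a \<xi>"
  "Aff (a - b) \<xi> = Aff a \<xi> - Aff b \<xi>" "Aff (- a) \<xi> = - Aff a \<xi>"
  by (auto simp: Aff_def algebra_simps)

definition Mn :: "(complex \<Rightarrow> real) \<Rightarrow> mink set" where
  "Mn \<phi> = {\<sigma>. \<forall>z\<in>sphere 0 1. Aff \<sigma> z \<le> \<phi> z}"

lemma phi_minus_eq: "phi_minus \<phi> \<xi> = Sup ((\<lambda>\<sigma>. Aff \<sigma> \<xi>) ` Mn \<phi>)"
proof -
  have "{c + b1 * Re \<xi> + b2 * Im \<xi> | c b1 b2.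
       \<forall>z\<in>sphere 0 1. c + b1 * Re z + b2 * Im z \<le> \<phi> z} = (\<lambda>\<sigma>. Aff \<sigma> \<xi>) ` Mn \<phi>"
  proof (intro equalityI subsetI)
    fix t assume "t \<in> {c + b1 * Re \<xi> + b2 * Im \<xi> | c b1 b2.
       \<forall>z\<in>sphere 0 1. c + b1 * Re z + b2 * Im z \<le> \<phi> z}"
    then obtain c b1 b2 where "t = c + b1 * Re \<xi> + b2 * Im \<xi>"
      "\<forall>z\<in>sphere 0 1. c + b1 * Re z + b2 * Im z \<le> \<phi> z" by blast
    then show "t \<in> (\<lambda>\<sigma>. Aff \<sigma> \<xi>) ` Mn \<phi>"
      by (intro image_eqI[of _ _ "(-c,b1,b2)"]) (auto simp: Aff_def Mn_def)
  next
    fix t assume "t \<in> (\<lambda>\<sigma>. Aff \<sigma> \<xi>) ` Mn \<phi>"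
    then obtain s0 s1 s2 where "t = Aff (s0,s1,s2) \<xi>" "(s0,s1,s2) \<in> Mn \<phi>" by auto
    then show "t \<in> {c + b1 * Re \<xi> + b2 * Im \<xi> | c b1 b2.
       \<forall>z\<in>sphere 0 1. c + b1 * Re z + b2 * Im z \<le> \<phi> z}"
    proof -
      have "t = (-s0) + s1*Re \<xi> + s2 * Im \<xi> \<and> (\<forall>z\<in>sphere 0 1. (-s0) + s1 * Re z + s2 * Im z \<le> \<phi> z)"
        using \<open>t = Aff (s0,s1,s2) \<xi>\<close> \<open>(s0,s1,s2) \<in> Mn \<phi>\<close> by (auto simp: Aff_def Mn_def)
      then show ?thesis by blast
    qed
  qed
  then show ?thesis by (simp add: phi_minus_def)
qed

lemma Aff_slope: "fst (snd \<sigma>) * Re \<xi> + snd (snd \<sigma>) * Im \<xi> \<le> sqrt ((fst (snd \<sigma>))^2 + (snd (snd \<sigma>))^2) * cmod \<xi>"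
proof -
  let ?w = "Complex (fst (snd \<sigma>)) (snd (snd \<sigma>))"
  have "fst (snd \<sigma>) * Re \<xi> + snd (snd \<sigma>) * Im \<xi> = Re (cnj ?w * \<xi>)" by simp
  also have "\<dots> \<le> cmod (cnj ?w * \<xi>)" by (rule complex_Re_le_cmod)
  also have "\<dots> = sqrt ((fst (snd \<sigma>))^2 + (snd (snd \<sigma>))^2) * cmod \<xi>"
    by (simp only: norm_mult complex_mod_cnj) (simp add: cmod_def)
  finally show ?thesis .
qed

lemma slope_bound:
  assumes M: "\<forall>z\<in>sphere 0 1. \<bar>\<phi> z\<bar> \<le> M" and s: "\<sigma> \<in> Mn \<phi>" and x: "cmod \<xi> \<le> 1"
  shows "sqrt ((fst (snd \<sigma>))^2 + (snd (snd \<sigma>))^2) * (1 - cmod \<xi>) \<le> M - Aff \<sigma> \<xi>"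
proof -
  obtain s0 s1 s2 where sv: "\<sigma> = (s0, s1, s2)" by (cases \<sigma>) auto
  define n where "n = sqrt (s1^2 + s2^2)"
  have ineq: "s1 * Re \<xi> + s2 * Im \<xi> \<le> n * cmod \<xi>" using Aff_slope[of \<sigma> \<xi>] by (simp add: sv n_def)
  show ?thesis
  proof (cases "n = 0")
    case True
    then have "s1 = 0" "s2 = 0" by (auto simp: n_def)
    moreover have "Aff \<sigma> 1 \<le> \<phi> 1" using s by (auto simp: Mn_def)
    moreover have "\<phi> 1 \<le> M" using M[rule_format, of 1] by simp
    ultimately show ?thesis by (simp add: sv Aff_def n_def)
  next
    case False
    have "n \<ge> 0" unfolding n_def by simp
    with False have np: "n > 0" by simp
    define z where "z = Complex (s1 / n) (s2 / n)"
    have "n^2 = s1^2 + s2^2" by (simp add: n_def)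
    have "(s1/n)^2 + (s2/n)^2 = (s1^2+s2^2)/n^2" by (simp add: power_divide add_divide_distrib)
    also have "\<dots> = 1" unfolding \<open>n^2 = s1^2 + s2^2\<close>[symmetric] using np by simp
    finally have cz: "cmod z = 1" by (simp add: z_def cmod_def)
    have "Aff \<sigma> z = - s0 + (s1^2 + s2^2) / n"
      by (simp add: sv Aff_def z_def power2_eq_square add_divide_distrib)
    also have "(s1^2 + s2^2) / n = n" unfolding \<open>n^2 = s1^2 + s2^2\<close>[symmetric] using np
      by (simp add: power2_eq_square)
    finally have az: "Aff \<sigma> z = - s0 + n" .
    have "Aff \<sigma> z \<le> \<phi> z" using s cz by (auto simp: Mn_def)
    moreover have "\<phi> z \<le> M" using M cz by force
    ultimately have "- s0 + n \<le> M" using az by simp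
    moreover have "Aff \<sigma> \<xi> \<le> - s0 + n * cmod \<xi>" using ineq by (simp add: sv Aff_def)
    ultimately show ?thesis by (simp add: sv n_def[symmetric] algebra_simps)
  qed
qed



definition SigM :: "(complex \<Rightarrow> real) \<Rightarrow> complex \<Rightarrow> mink set" where
  "SigM \<phi> \<eta> = {\<sigma>. (\<forall>\<xi>\<in>ball 0 1. Aff \<sigma> \<xi> \<le> phi_minus \<phi> \<xi>) \<and> Aff \<sigma> \<eta> = phi_minus \<phi> \<eta>}"

lemma Sigma_minus_SigM: "Sigma_minus X \<eta> = SigM (support_fn X) \<eta>"
  by (simp add: Sigma_minus_def SigM_def mink_inner_lift)

context
  fixes \<phi> :: "complex \<Rightarrow> real" and M :: real
  assumes M: "\<forall>z\<in>sphere 0 1. \<bar>\<phi> z\<bar> \<le> M"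
begin

lemma Mn_le_M: "\<sigma> \<in> Mn \<phi> \<Longrightarrow> cmod \<xi> \<le> 1 \<Longrightarrow> Aff \<sigma> \<xi> \<le> M"
  using slope_bound[OF M, of \<sigma> \<xi>]
  by (smt (verit, best) mult_nonneg_nonneg real_sqrt_ge_zero sum_power2_ge_zero)

lemma M_nonneg: "M \<ge> 0"
  using M[rule_format, of 1] by simp

lemma const_in_Mn: "(M, 0, 0) \<in> Mn \<phi>"
  using M by (auto simp: Mn_def Aff_def abs_le_iff)

lemma Aff_const: "Aff (M, 0, 0) \<xi> = - M"
  by (simp add: Aff_def)

lemma bdd: "cmod \<xi> \<le> 1 \<Longrightarrow> bdd_above ((\<lambda>\<sigma>. Aff \<sigma> \<xi>) ` Mn \<phi>)"
  using Mn_le_M by (auto intro!: bdd_aboveI[of _ M])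

lemma Mn_le_phi: "\<sigma> \<in> Mn \<phi> \<Longrightarrow> cmod \<xi> \<le> 1 \<Longrightarrow> Aff \<sigma> \<xi> \<le> phi_minus \<phi> \<xi>"
  unfolding phi_minus_eq by (rule cSup_upper) (auto intro: bdd)

lemma phi_minus_ge: "cmod \<xi> \<le> 1 \<Longrightarrow> - M \<le> phi_minus \<phi> \<xi>"
  using Mn_le_phi[OF const_in_Mn] Aff_const by metis

lemma phi_minus_le: "cmod \<xi> \<le> 1 \<Longrightarrow> phi_minus \<phi> \<xi> \<le> M"
  unfolding phi_minus_eq using const_in_Mn Mn_le_M
  by (intro cSup_least) auto

lemma Aff_scale: "Aff \<sigma> (complex_of_real r * z) = r * Aff \<sigma> z + (1 - r) * Aff \<sigma> 0"
  by (simp add: Aff_def algebra_simps)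

lemma phi_minus_radial:
  assumes z: "cmod z = 1" and r: "0 \<le> r" "r \<le> 1"
  shows "phi_minus \<phi> (complex_of_real r * z) \<le> r * \<phi> z + (1 - r) * M"
  unfolding phi_minus_eq
proof (rule cSup_least)
  show "(\<lambda>\<sigma>. Aff \<sigma> (complex_of_real r * z)) ` Mn \<phi> \<noteq> {}" using const_in_Mn by auto
next
  fix t assume "t \<in> (\<lambda>\<sigma>. Aff \<sigma> (complex_of_real r * z)) ` Mn \<phi>"
  then obtain \<sigma> where s: "\<sigma> \<in> Mn \<phi>" and t: "t = Aff \<sigma> (complex_of_real r * z)" by auto
  have "Aff \<sigma> z \<le> \<phi> z" using s z by (auto simp: Mn_def)
  moreover have "Aff \<sigma> 0 \<le> M" using Mn_le_M[OF s] by simp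
  ultimately have "r * Aff \<sigma> z + (1 - r) * Aff \<sigma> 0 \<le> r * \<phi> z + (1 - r) * M"
    using r by (intro add_mono mult_left_mono) auto
  then show "t \<le> r * \<phi> z + (1 - r) * M" using t Aff_scale by simp
qed

lemma real_lim_aux:
  fixes D K :: real
  assumes "\<And>r. 0 \<le> r \<Longrightarrow> r < 1 \<Longrightarrow> r * D \<le> (1 - r) * K"
  shows "D \<le> 0"
proof (rule ccontr)
  assume D: "\<not> D \<le> 0"
  show False
  proof (cases "K \<le> 0")
    case True
    have "1/2 * D \<le> (1 - 1/2) * K" using assms[of "1/2"] by simp
    then show False using D True by simp
  next
    case False
    define r where "r = (K + D/2) / (K + D)"
    have r0: "0 \<le> r" using D False by (simp add: r_def)
    have r1: "r < 1" using D False by (simp add: r_def field_simps)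
    have "r * (D + K) = K + D/2" using D False by (simp add: r_def field_simps)
    then have "r * D > (1 - r) * K" using D by (simp add: algebra_simps)
    then show False using assms[OF r0 r1] by simp
  qed
qed

lemma SigM_char:
  assumes x: "\<xi> \<in> ball 0 1"
  shows "SigM \<phi> \<xi> = {\<sigma>\<in>Mn \<phi>. Aff \<sigma> \<xi> = phi_minus \<phi> \<xi>}"
proof (intro equalityI subsetI)
  fix \<sigma> assume "\<sigma> \<in> {\<sigma>\<in>Mn \<phi>. Aff \<sigma> \<xi> = phi_minus \<phi> \<xi>}"
  then show "\<sigma> \<in> SigM \<phi> \<xi>" using Mn_le_phi by (auto simp: SigM_def)
next
  fix \<sigma> assume s: "\<sigma> \<in> SigM \<phi> \<xi>"
  have "Aff \<sigma> z \<le> \<phi> z" if z: "z \<in> sphere 0 1" for z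
  proof -
    have "r * (Aff \<sigma> z - \<phi> z) \<le> (1 - r) * (M - Aff \<sigma> 0)" if r: "0 \<le> r" "r < 1" for r
    proof -
      have "complex_of_real r * z \<in> ball 0 1" using z r by (simp add: norm_mult)
      then have "Aff \<sigma> (complex_of_real r * z) \<le> phi_minus \<phi> (complex_of_real r * z)"
        using s by (auto simp: SigM_def)
      also have "\<dots> \<le> r * \<phi> z + (1 - r) * M" using phi_minus_radial[of z r] z r by simp
      finally show ?thesis using Aff_scale[of \<sigma> r z] by (simp add: algebra_simps)
    qed
    then show ?thesis using real_lim_aux by fastforce
  qed
  then show "\<sigma> \<in> {\<sigma>\<in>Mn \<phi>. Aff \<sigma> \<xi> = phi_minus \<phi> \<xi>}" using s by (auto simp: Mn_def SigM_def)
qed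

lemma norm_triple: "norm (x::mink) \<le> \<bar>fst x\<bar> + \<bar>fst (snd x)\<bar> + \<bar>snd (snd x)\<bar>"
proof -
  obtain a b c where x: "x = (a, b, c)" by (cases x) auto
  have "norm (a, b, c) \<le> norm a + norm (b, c)" by (rule norm_Pair_le)
  also have "norm (b, c) \<le> norm b + norm c" by (rule norm_Pair_le)
  finally show ?thesis by (simp add: x)
qed

lemma Mn_norm_bound:
  assumes s: "\<sigma> \<in> Mn \<phi>" and x: "cmod \<xi> < 1" and L: "- M \<le> Aff \<sigma> \<xi>"
  shows "norm \<sigma> \<le> 2 * M + 8 * M / (1 - cmod \<xi>)"
proof -
  obtain s0 s1 s2 where sv: "\<sigma> = (s0, s1, s2)" by (cases \<sigma>) auto
  define n where "n = sqrt (s1^2 + s2^2)"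
  have "n * (1 - cmod \<xi>) \<le> M - Aff \<sigma> \<xi>" using slope_bound[OF M s] x by (simp add: sv n_def)
  also have "\<dots> \<le> 2 * M" using L by simp
  finally have nb: "n \<le> 2 * M / (1 - cmod \<xi>)" using x by (simp add: field_simps)
  have a1: "\<bar>s1\<bar> \<le> n" unfolding n_def by (rule real_le_rsqrt) simp
  have a2: "\<bar>s2\<bar> \<le> n" unfolding n_def by (rule real_le_rsqrt) simp
  have "\<bar>Aff \<sigma> \<xi>\<bar> \<le> M" using L Mn_le_M[OF s, of \<xi>] x by (simp add: abs_le_iff)
  moreover have "s0 = - Aff \<sigma> \<xi> + s1 * Re \<xi> + s2 * Im \<xi>" by (simp add: sv Aff_def)
  moreover have "\<bar>s1 * Re \<xi>\<bar> \<le> \<bar>s1\<bar>" using abs_Re_le_cmod[of \<xi>] x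
    by (simp add: abs_mult mult_left_le)
  moreover have "\<bar>s2 * Im \<xi>\<bar> \<le> \<bar>s2\<bar>" using abs_Im_le_cmod[of \<xi>] x
    by (simp add: abs_mult mult_left_le)
  ultimately have "\<bar>s0\<bar> \<le> M + \<bar>s1\<bar> + \<bar>s2\<bar>" by linarith
  then have "norm \<sigma> \<le> M + 2 * \<bar>s1\<bar> + 2 * \<bar>s2\<bar>" using norm_triple[of \<sigma>] by (simp add: sv)
  also have "\<dots> \<le> M + 4 * (2 * M / (1 - cmod \<xi>))" using a1 a2 nb by linarith
  finally show ?thesis using M_nonneg by simp
qed

lemma Mn_closed: "closed (Mn \<phi>)"
  unfolding closed_sequential_limits
proof (intro allI impI)
  fix x l assume h: "(\<forall>n. x n \<in> Mn \<phi>) \<and> x \<longlonglongrightarrow> l"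
  show "l \<in> Mn \<phi>" unfolding Mn_def
  proof (intro CollectI ballI)
    fix z assume z: "z \<in> sphere (0::complex) 1"
    have "(\<lambda>n. Aff (x n) z) \<longlonglongrightarrow> Aff l z" using h by (intro Aff_tendsto) auto
    moreover have "\<forall>n. Aff (x n) z \<le> \<phi> z" using h z by (auto simp: Mn_def)
    ultimately show "Aff l z \<le> \<phi> z" by (meson LIMSEQ_le_const2)
  qed
qed

lemma SigM_nonempty:
  assumes x: "\<xi> \<in> ball 0 1"
  shows "\<exists>\<sigma>. \<sigma> \<in> SigM \<phi> \<xi>"
proof -
  define K where "K = Mn \<phi> \<inter> {\<sigma>. - M \<le> Aff \<sigma> \<xi>}"
  have cx: "cmod \<xi> < 1" using x by simp
  have "closed {\<sigma>. - M \<le> Aff \<sigma> \<xi>}"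
    unfolding Aff_def by (intro closed_Collect_le continuous_intros)
  then have "closed K" unfolding K_def using Mn_closed by blast
  moreover have "bounded K" unfolding bounded_iff K_def using Mn_norm_bound cx by blast
  ultimately have "compact K" using compact_eq_bounded_closed by blast
  moreover have "K \<noteq> {}" using const_in_Mn Aff_const unfolding K_def by force
  moreover have "continuous_on K (\<lambda>\<sigma>. Aff \<sigma> \<xi>)" unfolding Aff_def by (intro continuous_intros)
  ultimately obtain s where sK: "s \<in> K" and smax: "\<forall>y\<in>K. Aff y \<xi> \<le> Aff s \<xi>"
    using continuous_attains_sup by blast
  have allle: "\<forall>y\<in>Mn \<phi>. Aff y \<xi> \<le> Aff s \<xi>"
  proof
    fix y assume y: "y \<in> Mn \<phi>"
    show "Aff y \<xi> \<le> Aff s \<xi>"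
    proof (cases "y \<in> K")
      case True then show ?thesis using smax by blast
    next
      case False then show ?thesis using y sK by (auto simp: K_def)
    qed
  qed
  have sM: "s \<in> Mn \<phi>" using sK by (simp add: K_def)
  have "phi_minus \<phi> \<xi> = Aff s \<xi>"
    unfolding phi_minus_eq using allle sM by (intro cSup_eq_maximum) auto
  then have "s \<in> SigM \<phi> \<xi>" using SigM_char[OF x] sM by simp
  then show ?thesis by blast
qed

lemma SigM_norm_bound:
  assumes x: "cmod \<xi> < 1" and s: "\<sigma> \<in> SigM \<phi> \<xi>"
  shows "norm \<sigma> \<le> 2 * M + 8 * M / (1 - cmod \<xi>)"
proof -
  have "\<sigma> \<in> Mn \<phi>" "Aff \<sigma> \<xi> = phi_minus \<phi> \<xi>" using SigM_char[of \<xi>] x s by auto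
  then show ?thesis using Mn_norm_bound x phi_minus_ge[of \<xi>] by simp
qed

lemma SigM_limit:
  assumes xn: "\<forall>n. x n \<in> ball 0 1" and xl: "x \<longlonglongrightarrow> \<eta>" and eta: "\<eta> \<in> ball 0 1"
    and gn: "\<forall>n. g n \<in> SigM \<phi> (x n)" and gl: "g \<longlonglongrightarrow> \<sigma>"
  shows "\<sigma> \<in> SigM \<phi> \<eta>"
proof -
  have gM: "\<forall>n. g n \<in> Mn \<phi>" and geq: "\<forall>n. Aff (g n) (x n) = phi_minus \<phi> (x n)"
    using gn xn SigM_char by auto
  have sM: "\<sigma> \<in> Mn \<phi>" using Mn_closed gM gl closed_sequential_limits by blast
  have le: "Aff \<sigma> \<eta> \<le> phi_minus \<phi> \<eta>" using Mn_le_phi[OF sM] eta by simp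
  obtain s where s: "s \<in> SigM \<phi> \<eta>" using SigM_nonempty[OF eta] by blast
  have sM2: "s \<in> Mn \<phi>" and seq: "Aff s \<eta> = phi_minus \<phi> \<eta>" using s SigM_char[OF eta] by auto
  have "(\<lambda>n. Aff s (x n)) \<longlonglongrightarrow> Aff s \<eta>" using xl by (intro Aff_tendsto) auto
  moreover have "(\<lambda>n. Aff (g n) (x n)) \<longlonglongrightarrow> Aff \<sigma> \<eta>" using xl gl by (intro Aff_tendsto)
  moreover have "\<forall>n. Aff s (x n) \<le> Aff (g n) (x n)"
    using geq Mn_le_phi[OF sM2] xn by (simp add: less_imp_le)
  ultimately have "Aff s \<eta> \<le> Aff \<sigma> \<eta>" by (meson LIMSEQ_le)
  then have "Aff \<sigma> \<eta> = phi_minus \<phi> \<eta>" using le seq by simp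
  then show ?thesis using SigM_char[OF eta] sM by auto
qed

end


lemma key_real:
  fixes p1 p2 q1 q2 u1 u2 :: real
  assumes "D = p1*q2 - p2*q1" "K = \<bar>p1\<bar>+\<bar>p2\<bar>+\<bar>q1\<bar>+\<bar>q2\<bar>"
    "x = p1*u1 + p2*u2" "y = q1*u1+q2*u2"
  shows "\<bar>D\<bar> * (\<bar>u1\<bar>+\<bar>u2\<bar>) \<le> 2*K*(\<bar>x\<bar>+\<bar>y\<bar>)"
proof -
  have e1: "D*u1 = q2*x - p2*y" unfolding assms(1,3,4) by (simp add: algebra_simps)
  have e2: "D*u2 = p1*y - q1*x" unfolding assms(1,3,4) by (simp add: algebra_simps)
  have "\<bar>D\<bar>*\<bar>u1\<bar> \<le> \<bar>q2\<bar>*\<bar>x\<bar> + \<bar>p2\<bar>*\<bar>y\<bar>"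
    using e1 by (metis abs_mult abs_triangle_ineq4)
  also have "\<dots> \<le> K*\<bar>x\<bar> + K*\<bar>y\<bar>" using assms(2)
    by (intro add_mono mult_right_mono) auto
  finally have 1: "\<bar>D\<bar>*\<bar>u1\<bar> \<le> K*\<bar>x\<bar> + K*\<bar>y\<bar>" .
  have "\<bar>D\<bar>*\<bar>u2\<bar> \<le> \<bar>p1\<bar>*\<bar>y\<bar> + \<bar>q1\<bar>*\<bar>x\<bar>"
    using e2 by (metis abs_mult abs_triangle_ineq4)
  also have "\<dots> \<le> K*\<bar>y\<bar> + K*\<bar>x\<bar>" using assms(2)
    by (intro add_mono mult_right_mono) auto
  finally have 2: "\<bar>D\<bar>*\<bar>u2\<bar> \<le> K*\<bar>y\<bar> + K*\<bar>x\<bar>" .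
  show ?thesis using 1 2 by (simp add: algebra_simps)
qed

lemma max_real: "max 0 (max x y) - (x+y)/3 \<ge> (\<bar>x\<bar>+\<bar>y\<bar>)/(6::real)"
proof -
  define m where "m = max 0 (max x y)"
  have h: "m \<ge> 0" "m \<ge> x" "m \<ge> y" by (auto simp: m_def)
  have "\<bar>x\<bar>+\<bar>y\<bar> \<le> 6 * m - 2 * x - 2 * y"
    using h by (cases "0 \<le> x"; cases "0 \<le> y") (simp_all add: abs_if)
  then have "(\<bar>x\<bar>+\<bar>y\<bar>)/6 \<le> m - (x+y)/3" by (simp add: field_simps)
  then show ?thesis by (simp add: m_def)
qed

context
  fixes \<phi> :: "complex \<Rightarrow> real" and M :: real
  assumes M: "\<forall>z\<in>sphere 0 1. \<bar>\<phi> z\<bar> \<le> M"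
begin

lemma SigM_collinear:
  assumes x: "\<xi> \<in> ball 0 1" and a: "a \<in> SigM \<phi> \<xi>" and b: "b \<in> SigM \<phi> \<xi>" and c: "c \<in> SigM \<phi> \<xi>"
  shows "a = b \<or> (\<exists>t. c - a = t *\<^sub>R (b - a))"
proof -
  note ch = SigM_char[OF M x]
  have aM: "a \<in> Mn \<phi>" and bM: "b \<in> Mn \<phi>" and cM: "c \<in> Mn \<phi>"
    and ae: "Aff a \<xi> = phi_minus \<phi> \<xi>" and be: "Aff b \<xi> = phi_minus \<phi> \<xi>"
    and ce: "Aff c \<xi> = phi_minus \<phi> \<xi>" using a b c ch by auto
  obtain a0 a1 a2 where av: "a = (a0,a1,a2)" by (cases a) auto
  obtain b0 b1 b2 where bv: "b = (b0,b1,b2)" by (cases b) auto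
  obtain c0 c1 c2 where cv: "c = (c0,c1,c2)" by (cases c) auto
  define p1 where "p1 = b1 - a1"
  define p2 where "p2 = b2 - a2"
  define q1 where "q1 = c1 - a1"
  define q2 where "q2 = c2 - a2"
  have pb0: "b0 - a0 = p1 * Re \<xi> + p2 * Im \<xi>" using ae be
    by (simp add: av bv Aff_def p1_def p2_def algebra_simps)
  have qc0: "c0 - a0 = q1 * Re \<xi> + q2 * Im \<xi>" using ae ce
    by (simp add: av cv Aff_def q1_def q2_def algebra_simps)
  define D where "D = p1*q2 - p2*q1"
  show ?thesis
  proof (cases "D = 0")
    case True
    show ?thesis
    proof (cases "p1 = 0 \<and> p2 = 0")
      case True
      then have "a = b" using pb0 by (simp add: av bv p1_def p2_def)
      then show ?thesis by simp
    next
      case False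
      define t where "t = (p1*q1 + p2*q2) / (p1^2 + p2^2)"
      have pos: "p1^2 + p2^2 \<noteq> 0" using False by (simp add: sum_power2_eq_zero_iff)
      have "q1 * (p1^2 + p2^2) = p1 * (p1*q1 + p2*q2)"
        using \<open>D = 0\<close> by (simp add: D_def power2_eq_square algebra_simps)
      then have t1: "q1 = t * p1" using pos by (simp add: t_def field_simps)
      have "q2 * (p1^2 + p2^2) = p2 * (p1*q1 + p2*q2)"
        using \<open>D = 0\<close> by (simp add: D_def power2_eq_square algebra_simps)
      then have t2: "q2 = t * p2" using pos by (simp add: t_def field_simps)
      have "c0 - a0 = q1 * Re \<xi> + q2 * Im \<xi>" by (rule qc0)
      also have "\<dots> = t * (p1 * Re \<xi> + p2 * Im \<xi>)" by (simp add: t1 t2 algebra_simps)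
      also have "\<dots> = t * (b0 - a0)" using pb0 by simp
      finally have t0: "c0 - a0 = t * (b0 - a0)" .
      have "c - a = t *\<^sub>R (b - a)"
        using t1 t2 t0 by (simp add: av bv cv p1_def p2_def q1_def q2_def algebra_simps)
      then show ?thesis by blast
    qed
  next
    case False
    define K where "K = \<bar>p1\<bar>+\<bar>p2\<bar>+\<bar>q1\<bar>+\<bar>q2\<bar>"
    have Kpos: "K > 0"
    proof -
      have "K \<ge> 0" by (simp add: K_def)
      moreover have "K \<noteq> 0"
      proof
        assume "K = 0"
        then have "p1 = 0" "p2 = 0" "q1 = 0" "q2 = 0" unfolding K_def by arith+
        then show False using False by (simp add: D_def)
      qed
      ultimately show ?thesis by simp
    qed
    define \<epsilon> where "\<epsilon> = \<bar>D\<bar> * (1 - cmod \<xi>) / (12 * K)"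
    have epos: "\<epsilon> > 0" using False Kpos x by (simp add: \<epsilon>_def)
    define m where "m = (1/3) *\<^sub>R (a + b + c) - (\<epsilon>, 0, 0)"
    have "m \<in> Mn \<phi>" unfolding Mn_def
    proof (intro CollectI ballI)
      fix z assume z: "z \<in> sphere (0::complex) 1"
      define u1 where "u1 = Re z - Re \<xi>"
      define u2 where "u2 = Im z - Im \<xi>"
      define xx where "xx = p1*u1 + p2*u2"
      define yy where "yy = q1*u1 + q2*u2"
      have kr: "\<bar>D\<bar> * (\<bar>u1\<bar>+\<bar>u2\<bar>) \<le> 2*K*(\<bar>xx\<bar>+\<bar>yy\<bar>)"
        by (rule key_real[OF D_def K_def xx_def yy_def])
      have "1 - cmod \<xi> \<le> cmod (z - \<xi>)"
        using z norm_triangle_ineq2[of z \<xi>] by simp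
      also have "\<dots> \<le> \<bar>u1\<bar> + \<bar>u2\<bar>" using cmod_le[of "z - \<xi>"] by (simp add: u1_def u2_def)
      finally have "\<bar>D\<bar> * (1 - cmod \<xi>) \<le> \<bar>D\<bar> * (\<bar>u1\<bar>+\<bar>u2\<bar>)" by (simp add: mult_left_mono)
      with kr have "\<bar>D\<bar> * (1 - cmod \<xi>) \<le> 2*K*(\<bar>xx\<bar>+\<bar>yy\<bar>)" by linarith
      then have e6: "\<epsilon> \<le> (\<bar>xx\<bar>+\<bar>yy\<bar>)/6" using Kpos by (simp add: \<epsilon>_def field_simps)
      have bx: "Aff b z = Aff a z + xx"
        using ae be by (simp add: av bv Aff_def xx_def p1_def p2_def u1_def u2_def algebra_simps)
      have cy: "Aff c z = Aff a z + yy"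
        using ae ce by (simp add: av cv Aff_def yy_def q1_def q2_def u1_def u2_def algebra_simps)
      have "Aff m z = (Aff a z + Aff b z + Aff c z)/3 + \<epsilon>"
        by (simp add: m_def av bv cv Aff_def field_simps)
      also have "\<dots> = Aff a z + (xx + yy)/3 + \<epsilon>" using bx cy by simp
      also have "\<dots> \<le> Aff a z + max 0 (max xx yy)" using e6 max_real[of xx yy] by linarith
      also have "\<dots> \<le> \<phi> z"
      proof -
        have "Aff a z \<le> \<phi> z" "Aff b z \<le> \<phi> z" "Aff c z \<le> \<phi> z"
          using aM bM cM z by (auto simp: Mn_def)
        then show ?thesis using bx cy by (auto simp: max_def)
      qed
      finally show "Aff m z \<le> \<phi> z" .
    qed
    then have "Aff m \<xi> \<le> phi_minus \<phi> \<xi>" using Mn_le_phi[OF M] x by simp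
    moreover have "Aff m \<xi> = phi_minus \<phi> \<xi> + \<epsilon>"
    proof -
      have "Aff m \<xi> = (Aff a \<xi> + Aff b \<xi> + Aff c \<xi>)/3 + \<epsilon>"
        by (simp add: m_def av bv cv Aff_def field_simps)
      then show ?thesis using ae be ce by simp
    qed
    ultimately show ?thesis using epos by simp
  qed
qed

lemma SigM_convex: "\<xi> \<in> ball 0 1 \<Longrightarrow> convex (SigM \<phi> \<xi>)"
  unfolding SigM_char[OF M]
proof (rule convexI, intro CollectI conjI)
  fix x y u v assume x: "x \<in> {\<sigma> \<in> Mn \<phi>. Aff \<sigma> \<xi> = phi_minus \<phi> \<xi>}"
    and y: "y \<in> {\<sigma> \<in> Mn \<phi>. Aff \<sigma> \<xi> = phi_minus \<phi> \<xi>}" and u: "0 \<le> u" and v: "0 \<le> v" and uv1: "u + v = (1::real)"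
  have uv: "0 \<le> u \<and> 0 \<le> v \<and> u + v = (1::real)" using u v uv1 by simp
  show "Aff (u *\<^sub>R x + v *\<^sub>R y) \<xi> = phi_minus \<phi> \<xi>"
    using x y uv by (simp add: Aff_linear) (metis distrib_right mult_1)
  show "u *\<^sub>R x + v *\<^sub>R y \<in> Mn \<phi>" unfolding Mn_def
  proof (intro CollectI ballI)
    fix z assume z: "z \<in> sphere (0::complex) 1"
    have "Aff x z \<le> \<phi> z" "Aff y z \<le> \<phi> z" using x y z by (auto simp: Mn_def)
    then have "u * Aff x z + v * Aff y z \<le> u * \<phi> z + v * \<phi> z"
      using uv by (intro add_mono mult_left_mono) auto
    then show "Aff (u *\<^sub>R x + v *\<^sub>R y) z \<le> \<phi> z" using uv
      by (simp add: Aff_linear) (metis distrib_right mult_1)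
  qed
qed

lemma SigM_closed: "\<xi> \<in> ball 0 1 \<Longrightarrow> closed (SigM \<phi> \<xi>)"
  unfolding closed_sequential_limits
  using SigM_limit[OF M, of "\<lambda>n. \<xi>"] by (auto simp: tendsto_const)

lemma SigM_bounded: "\<xi> \<in> ball 0 1 \<Longrightarrow> bounded (SigM \<phi> \<xi>)"
  unfolding bounded_iff using SigM_norm_bound[OF M] by (metis mem_ball_0)

lemma SigM_segment:
  assumes x: "\<xi> \<in> ball 0 1"
  shows "\<exists>a b. SigM \<phi> \<xi> = closed_segment a b"
proof -
  let ?S = "SigM \<phi> \<xi>"
  have cS: "compact ?S" using SigM_closed[OF x] SigM_bounded[OF x] compact_eq_bounded_closed by blast
  have ne: "?S \<noteq> {}" using SigM_nonempty[OF M x] by blast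
  obtain p q where p: "p \<in> ?S" and q: "q \<in> ?S" and d: "dist p q = diameter ?S"
    using diameter_compact_attained[OF cS ne] by blast
  have "?S = closed_segment p q"
  proof
    show "closed_segment p q \<subseteq> ?S" using SigM_convex[OF x] p q by (simp add: closed_segment_subset)
  next
    show "?S \<subseteq> closed_segment p q"
    proof
      fix z assume z: "z \<in> ?S"
      have dpz: "dist p z \<le> dist p q" and dqz: "dist q z \<le> dist p q"
        using diameter_bounded_bound[OF SigM_bounded[OF x]] p q z d by auto
      show "z \<in> closed_segment p q"
      proof (cases "p = q")
        case True
        then show ?thesis using dpz by simp
      next
        case False
        then obtain t where t: "z - p = t *\<^sub>R (q - p)" using SigM_collinear[OF x p q z] by blast
        have zt: "z = p + t *\<^sub>R (q - p)" using t by (simp add: algebra_simps)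
        have npq: "norm (q - p) > 0" using False by simp
        have "dist p z = \<bar>t\<bar> * norm (q - p)" using zt by (simp add: dist_norm)
        moreover have "dist q z = \<bar>1 - t\<bar> * norm (q - p)"
        proof -
          have "q - z = (1 - t) *\<^sub>R (q - p)" using zt by (simp add: algebra_simps)
          then show ?thesis by (simp add: dist_norm)
        qed
        moreover have "dist p q = norm (q - p)" by (simp add: dist_norm norm_minus_commute)
        ultimately have "\<bar>t\<bar> \<le> 1" "\<bar>1 - t\<bar> \<le> 1" using dpz dqz npq by auto
        then have "0 \<le> t" "t \<le> 1" by auto
        then show ?thesis unfolding closed_segment_def using zt
          by (auto intro!: exI[of _ t] simp: algebra_simps)
      qed
    qed
  qed
  then show ?thesis by blast
qed

end


lemma seg_mid_eq: "S = closed_segment (a::mink) b \<Longrightarrow> seg_mid S = midpoint a b"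
  unfolding seg_mid_def
proof (rule the_equality)
  assume "S = closed_segment a b"
  then show "\<exists>a' b'. S = closed_segment a' b' \<and> midpoint a b = midpoint a' b'" by blast
next
  fix m assume S: "S = closed_segment a b" and "\<exists>a' b'. S = closed_segment a' b' \<and> m = midpoint a' b'"
  then obtain a' b' where "closed_segment a b = closed_segment a' b'" "m = midpoint a' b'" by blast
  then have "{a, b} = {a', b'}" "m = midpoint a' b'" by simp_all
  then show "m = midpoint a b" by (metis doubleton_eq_iff midpoint_sym)
qed

definition EM :: "(complex \<Rightarrow> real) \<Rightarrow> complex \<Rightarrow> complex" where
  "EM \<phi> \<xi> = EF (seg_mid (SigM \<phi> \<xi>)) \<xi>"

lemma inv_n_tendsto: "(\<lambda>n. c * inverse (real (Suc n))) \<longlonglongrightarrow> 0"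
  using tendsto_mult[OF tendsto_const[of c] LIMSEQ_inverse_real_of_nat] by simp

context
  fixes \<phi> :: "complex \<Rightarrow> real" and M :: real
  assumes M: "\<forall>z\<in>sphere 0 1. \<bar>\<phi> z\<bar> \<le> M"
begin

lemma seg_mid_in: "\<xi> \<in> ball 0 1 \<Longrightarrow> seg_mid (SigM \<phi> \<xi>) \<in> SigM \<phi> \<xi>"
  using SigM_segment[OF M] seg_mid_eq by (metis midpoint_in_closed_segment)

lemma subseq_lemma:
  assumes R: "R < 1" and xn: "\<forall>n. cmod (x n) \<le> R" and xl: "x \<longlonglongrightarrow> \<eta>" and eta: "\<eta> \<in> ball 0 1"
  shows "\<exists>r \<sigma>. strict_mono r \<and> ((\<lambda>n. seg_mid (SigM \<phi> (x n))) \<circ> r) \<longlonglongrightarrow> \<sigma> \<and> \<sigma> \<in> SigM \<phi> \<eta>"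
proof -
  define g where "g n = seg_mid (SigM \<phi> (x n))" for n
  have xb: "\<forall>n. x n \<in> ball 0 1" using xn R by (meson le_less_trans mem_ball_0)
  have gs: "\<forall>n. g n \<in> SigM \<phi> (x n)" using seg_mid_in xb by (simp add: g_def)
  define C where "C = 2 * M + 8 * M / (1 - R)"
  have "\<forall>n. g n \<in> cball 0 C"
  proof
    fix n
    have "norm (g n) \<le> 2 * M + 8 * M / (1 - cmod (x n))"
      using SigM_norm_bound[OF M] gs xb by simp
    also have "8 * M / (1 - cmod (x n)) \<le> 8 * M / (1 - R)"
    proof -
      have h1: "1 - cmod (x n) > 0" "1 - R > 0" using xn[rule_format, of n] R by linarith+
      have le: "1 - R \<le> 1 - cmod (x n)" using xn[rule_format, of n] by linarith
      have "0 \<le> 8 * M" using M_nonneg[OF M] by simp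
      from divide_left_mono[OF le this mult_pos_pos[OF h1]] show ?thesis .
    qed
    finally show "g n \<in> cball 0 C" by (simp add: C_def)
  qed
  then obtain \<sigma> r where sr: "strict_mono r" "(g \<circ> r) \<longlonglongrightarrow> \<sigma>"
    using seq_compactE[OF compact_imp_seq_compact[OF compact_cball]] by metis
  have "(x \<circ> r) \<longlonglongrightarrow> \<eta>" using LIMSEQ_subseq_LIMSEQ[OF xl sr(1)] .
  then have "\<sigma> \<in> SigM \<phi> \<eta>"
    using SigM_limit[OF M, of "x \<circ> r" \<eta> "g \<circ> r" \<sigma>] xb gs eta sr(2) by simp
  then show ?thesis using sr unfolding g_def[abs_def] by blast
qed

lemma main_minus:
  assumes eta: "\<eta> \<in> ball 0 1"
  shows "isCont (EM \<phi>) \<eta> \<longleftrightarrow> (\<exists>\<sigma>. SigM \<phi> \<eta> = {\<sigma>})"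
proof -
  define \<rho> where "\<rho> = (1 - cmod \<eta>) / 2"
  have rho: "\<rho> > 0" using eta by (simp add: \<rho>_def)
  define R where "R = cmod \<eta> + \<rho>"
  have R: "R < 1" using eta by (simp add: R_def \<rho>_def field_simps)
  have inR: "cmod x \<le> R" if "cmod (x - \<eta>) \<le> \<rho>" for x
    using that norm_triangle_ineq2[of x \<eta>] by (simp add: R_def)
  show ?thesis
  proof
    assume cont: "isCont (EM \<phi>) \<eta>"
    show "\<exists>\<sigma>. SigM \<phi> \<eta> = {\<sigma>}"
    proof (rule ccontr)
      assume ns: "\<not> (\<exists>\<sigma>. SigM \<phi> \<eta> = {\<sigma>})"
      obtain a b where ab: "SigM \<phi> \<eta> = closed_segment a b" using SigM_segment[OF M eta] by blast
      have aS: "a \<in> SigM \<phi> \<eta>" and bS: "b \<in> SigM \<phi> \<eta>" using ab by auto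
      have anb: "a \<noteq> b"
      proof
        assume "a = b"
        have "SigM \<phi> \<eta> = closed_segment a a" using ab \<open>a = b\<close> by (simp only:)
        then have "SigM \<phi> \<eta> = {a}" by (simp only: closed_segment_idem)
        then show False using ns by blast
      qed
      have aM: "a \<in> Mn \<phi>" and ae: "Aff a \<eta> = phi_minus \<phi> \<eta>"
        and be: "Aff b \<eta> = phi_minus \<phi> \<eta>" using aS bS SigM_char[OF M eta] by auto
      obtain a0 a1 a2 where av: "a = (a0,a1,a2)" by (cases a) auto
      obtain b0 b1 b2 where bv: "b = (b0,b1,b2)" by (cases b) auto
      define P where "P = Complex (a1 - b1) (a2 - b2)"
      have Pnz: "P \<noteq> 0"
      proof
        assume "P = 0"
        then have "a1 = b1" "a2 = b2" by (auto simp: P_def complex_eq_iff)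
        then have "a0 = b0" using ae be by (simp add: av bv Aff_def)
        then show False using anb \<open>a1 = b1\<close> \<open>a2 = b2\<close> av bv by simp
      qed
      define S where "S v = fst (snd v) * (a1 - b1) + snd (snd v) * (a2 - b2)" for v :: mink
      define t where "t n = \<rho> / cmod P * inverse (real (Suc n))" for n
      have tpos: "t n > 0" for n using rho Pnz by (simp add: t_def)
      define x where "x n = \<eta> + complex_of_real (t n) * P" for n
      have xd: "cmod (x n - \<eta>) \<le> \<rho>" for n
      proof -
        have "cmod (x n - \<eta>) = t n * cmod P" using tpos[of n] by (simp add: x_def norm_mult)
        also have "\<dots> = \<rho> * inverse (real (Suc n))" using Pnz by (simp add: t_def)
        also have "\<dots> \<le> \<rho>" using rho by (simp add: field_simps)
        finally show ?thesis .
      qed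
      have xR: "\<forall>n. cmod (x n) \<le> R" using xd inR by blast
      have xb: "\<forall>n. x n \<in> ball 0 1" using xR R by (meson le_less_trans mem_ball_0)
      have tl: "t \<longlonglongrightarrow> 0" unfolding t_def by (rule inv_n_tendsto)
      have xl: "x \<longlonglongrightarrow> \<eta>"
        using tendsto_add[OF tendsto_const[of \<eta>] tendsto_mult[OF tendsto_of_real[OF tl] tendsto_const[of P]]]
        by (simp add: x_def[abs_def])
      obtain r \<sigma> where sr: "strict_mono r" and gl: "((\<lambda>n. seg_mid (SigM \<phi> (x n))) \<circ> r) \<longlonglongrightarrow> \<sigma>"
        and sS: "\<sigma> \<in> SigM \<phi> \<eta>"
        using subseq_lemma[OF R xR xl eta] by blast
      define g where "g n = seg_mid (SigM \<phi> (x n))" for n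
      have gs: "g n \<in> SigM \<phi> (x n)" for n using seg_mid_in xb by (simp add: g_def)
      have Sg: "S (g n) \<ge> S a" for n
      proof -
        have gM: "g n \<in> Mn \<phi>" and ge: "Aff (g n) (x n) = phi_minus \<phi> (x n)"
          using gs[of n] SigM_char[OF M] xb by auto
        have i1: "Aff a (x n) \<le> phi_minus \<phi> (x n)" using Mn_le_phi[OF M aM] xb by (simp add: less_imp_le)
        have i2: "Aff (g n) \<eta> \<le> phi_minus \<phi> \<eta>" using Mn_le_phi[OF M gM] eta by simp
        have i3: "Aff v (x n) = Aff v \<eta> + t n * S v" for v
          by (simp add: Aff_def x_def S_def P_def algebra_simps)
        have "t n * S a \<le> t n * S (g n)" using i1 i2 i3[of a] i3[of "g n"] ge ae by linarith
        then show ?thesis using tpos[of n] by simp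
      qed
      have gl2: "(\<lambda>n. g (r n)) \<longlonglongrightarrow> \<sigma>" using gl by (simp add: g_def o_def)
      have "(\<lambda>n. S (g (r n))) \<longlonglongrightarrow> S \<sigma>"
        unfolding S_def by (intro tendsto_intros gl2)
      moreover have "\<exists>N. \<forall>n\<ge>N. S a \<le> S (g (r n))" using Sg by simp
      ultimately have Ss: "S a \<le> S \<sigma>" by (rule LIMSEQ_le_const)
      obtain u where u: "0 \<le> u" "u \<le> 1" "\<sigma> = (1 - u) *\<^sub>R a + u *\<^sub>R b"
        using sS ab unfolding closed_segment_def by auto
      have "S \<sigma> = S a - u * ((a1 - b1)^2 + (a2 - b2)^2)"
        by (simp add: u(3) S_def av bv algebra_simps power2_eq_square)
      moreover have "(a1 - b1)^2 + (a2 - b2)^2 > 0"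
        using Pnz by (simp add: P_def sum_power2_gt_zero_iff complex_eq_iff)
      ultimately have "u * ((a1 - b1)^2 + (a2 - b2)^2) \<le> 0" "(a1 - b1)^2 + (a2 - b2)^2 > 0"
        using Ss by linarith+
      then have "u \<le> 0" by (simp add: mult_le_0_iff)
      then have "u = 0" using u(1) by simp
      then have sa: "\<sigma> = a" using u by simp
      have lim1: "(\<lambda>n. EF ((g \<circ> r) n) ((x \<circ> r) n)) \<longlonglongrightarrow> EF a \<eta>"
        using EF_tendsto[OF gl LIMSEQ_subseq_LIMSEQ[OF xl sr]] sa by (simp add: g_def[abs_def])
      moreover have "(\<lambda>n. EM \<phi> ((x \<circ> r) n)) \<longlonglongrightarrow> EM \<phi> \<eta>"
        using isCont_tendsto_compose[OF cont LIMSEQ_subseq_LIMSEQ[OF xl sr]] .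
      moreover have "EM \<phi> ((x \<circ> r) n) = EF ((g \<circ> r) n) ((x \<circ> r) n)" for n
        by (simp add: EM_def g_def)
      moreover have "EM \<phi> \<eta> = EF (midpoint a b) \<eta>" using seg_mid_eq[OF ab] by (simp add: EM_def)
      ultimately have "(\<lambda>n. EF ((g \<circ> r) n) ((x \<circ> r) n)) \<longlonglongrightarrow> EF (midpoint a b) \<eta>" by simp
      then have "EF a \<eta> = EF (midpoint a b) \<eta>" using \<open>(\<lambda>n. EF ((g \<circ> r) n) ((x \<circ> r) n)) \<longlonglongrightarrow> EF a \<eta>\<close>
        by (rule LIMSEQ_unique[rotated])
      then have ef0: "EF (a - midpoint a b) \<eta> = 0" by (simp add: EF_diff)
      have af0: "Aff (a - midpoint a b) \<eta> = 0"
        using ae be by (simp add: midpoint_def Aff_linear)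
      have cm: "cmod \<eta> < 1" using eta by simp
      have "a - midpoint a b = 0" by (rule EF_inj[OF af0 ef0 cm])
      then have "midpoint a b = a" by simp
      then have "a = b" by (simp only: midpoint_eq_endpoint)
      then show False using anb by simp
    qed
  next
    assume "\<exists>\<sigma>. SigM \<phi> \<eta> = {\<sigma>}"
    then obtain \<sigma> where s: "SigM \<phi> \<eta> = {\<sigma>}" by blast
    have fe: "EM \<phi> \<eta> = EF \<sigma> \<eta>"
      using seg_mid_eq[of "SigM \<phi> \<eta>" \<sigma> \<sigma>] s by (simp add: EM_def)
    show "isCont (EM \<phi>) \<eta>"
      unfolding isCont_def LIM_eq
    proof (rule ccontr)
      assume "\<not> (\<forall>r>0. \<exists>s>0. \<forall>x. x \<noteq> \<eta> \<and> norm (x - \<eta>) < s \<longrightarrow> norm (EM \<phi> x - EM \<phi> \<eta>) < r)"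
      then obtain e where e: "e > 0" and
        h: "\<forall>s>0. \<exists>x. x \<noteq> \<eta> \<and> norm (x - \<eta>) < s \<and> \<not> norm (EM \<phi> x - EM \<phi> \<eta>) < e"
        by blast
      have "\<forall>n. \<exists>x. norm (x - \<eta>) < \<rho> * inverse (real (Suc n)) \<and> \<not> norm (EM \<phi> x - EM \<phi> \<eta>) < e"
      proof
        fix n
        have pos: "\<rho> * inverse (real (Suc n)) > 0" using rho by simp
        show "\<exists>x. norm (x - \<eta>) < \<rho> * inverse (real (Suc n)) \<and> \<not> norm (EM \<phi> x - EM \<phi> \<eta>) < e"
          using h[rule_format, OF pos] by blast
      qed
      from choice[OF this] obtain x where x: "\<forall>n. norm (x n - \<eta>) < \<rho> * inverse (real (Suc n)) \<and> \<not> norm (EM \<phi> (x n) - EM \<phi> \<eta>) < e"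
        by blast
      have xd: "cmod (x n - \<eta>) \<le> \<rho>" for n
      proof -
        have "cmod (x n - \<eta>) \<le> \<rho> * inverse (real (Suc n))" using x less_imp_le by blast
        also have "\<dots> \<le> \<rho>" using rho by (simp add: field_simps)
        finally show ?thesis .
      qed
      have xR: "\<forall>n. cmod (x n) \<le> R" using xd inR by blast
      have xb: "\<forall>n. x n \<in> ball 0 1" using xR R by (meson le_less_trans mem_ball_0)
      have "(\<lambda>n. x n - \<eta>) \<longlonglongrightarrow> 0"
      proof (rule Lim_null_comparison[OF _ inv_n_tendsto[of \<rho>]])
        show "\<forall>\<^sub>F n in sequentially. norm (x n - \<eta>) \<le> \<rho> * inverse (real (Suc n))"
          using x by (simp add: less_imp_le)
      qed
      then have xl: "x \<longlonglongrightarrow> \<eta>" using tendsto_add[OF _ tendsto_const[of \<eta>]] by fastforce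
      obtain r \<sigma>' where sr: "strict_mono r" and gl: "((\<lambda>n. seg_mid (SigM \<phi> (x n))) \<circ> r) \<longlonglongrightarrow> \<sigma>'"
        and sS: "\<sigma>' \<in> SigM \<phi> \<eta>"
        using subseq_lemma[OF R xR xl eta] by blast
      have "\<sigma>' = \<sigma>" using sS s by simp
      have "(\<lambda>n. EF (((\<lambda>n. seg_mid (SigM \<phi> (x n))) \<circ> r) n) ((x \<circ> r) n)) \<longlonglongrightarrow> EF \<sigma> \<eta>"
        using EF_tendsto[OF gl LIMSEQ_subseq_LIMSEQ[OF xl sr]] \<open>\<sigma>' = \<sigma>\<close> by simp
      then have "(\<lambda>n. EM \<phi> (x (r n))) \<longlonglongrightarrow> EF \<sigma> \<eta>" by (simp add: EM_def o_def)
      then have "(\<lambda>n. EM \<phi> (x (r n))) \<longlonglongrightarrow> EM \<phi> \<eta>" by (simp only: fe)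
      then obtain N where "\<forall>n\<ge>N. norm (EM \<phi> (x (r n)) - EM \<phi> \<eta>) < e"
        using e unfolding LIMSEQ_iff by blast
      then have "norm (EM \<phi> (x (r N)) - EM \<phi> \<eta>) < e" by simp
      then show False using x by blast
    qed
  qed
qed

end


lemma support_bounded:
  assumes "continuous_on (sphere 0 1) X"
  shows "\<exists>M. \<forall>z\<in>sphere 0 1. \<bar>support_fn X z\<bar> \<le> M"
proof -
  have "continuous_on (sphere 0 1) (\<lambda>z. Re (X z / (\<i> * z)))"
    by (intro continuous_intros assms) auto
  then have "compact ((\<lambda>z. Re (X z / (\<i> * z))) ` sphere 0 1)"
    by (intro compact_continuous_image) auto
  then have "bounded ((\<lambda>z. Re (X z / (\<i> * z))) ` sphere 0 1)" by (rule compact_imp_bounded)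
  then obtain B where "\<forall>y\<in>(\<lambda>z. Re (X z / (\<i> * z))) ` sphere 0 1. norm y \<le> B"
    unfolding bounded_iff by blast
  then show ?thesis by (auto simp: support_fn_def)
qed

lemma phi_plus_eq: "phi_plus \<phi> \<xi> = - phi_minus (\<lambda>z. - \<phi> z) \<xi>"
proof -
  have "uminus ` {c + b1 * Re \<xi> + b2 * Im \<xi> | c b1 b2.
       \<forall>z\<in>sphere 0 1. c + b1 * Re z + b2 * Im z \<ge> \<phi> z} =
     {c + b1 * Re \<xi> + b2 * Im \<xi> | c b1 b2.
       \<forall>z\<in>sphere 0 1. c + b1 * Re z + b2 * Im z \<le> - \<phi> z}"
  proof (intro equalityI subsetI)
    fix t assume "t \<in> uminus ` {c + b1 * Re \<xi> + b2 * Im \<xi> | c b1 b2.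
       \<forall>z\<in>sphere 0 1. c + b1 * Re z + b2 * Im z \<ge> \<phi> z}"
    then obtain c b1 b2 where h: "t = - (c + b1 * Re \<xi> + b2 * Im \<xi>)"
      "\<forall>z\<in>sphere 0 1. c + b1 * Re z + b2 * Im z \<ge> \<phi> z" by blast
    then have "t = (-c) + (-b1) * Re \<xi> + (-b2) * Im \<xi> \<and>
       (\<forall>z\<in>sphere 0 1. (-c) + (-b1) * Re z + (-b2) * Im z \<le> - \<phi> z)" by force
    then show "t \<in> {c + b1 * Re \<xi> + b2 * Im \<xi> | c b1 b2.
       \<forall>z\<in>sphere 0 1. c + b1 * Re z + b2 * Im z \<le> - \<phi> z}" by blast
  next
    fix t assume "t \<in> {c + b1 * Re \<xi> + b2 * Im \<xi> | c b1 b2.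
       \<forall>z\<in>sphere 0 1. c + b1 * Re z + b2 * Im z \<le> - \<phi> z}"
    then obtain c b1 b2 where h: "t = c + b1 * Re \<xi> + b2 * Im \<xi>"
      "\<forall>z\<in>sphere 0 1. c + b1 * Re z + b2 * Im z \<le> - \<phi> z" by blast
    then have "- t = (-c) + (-b1) * Re \<xi> + (-b2) * Im \<xi> \<and>
       (\<forall>z\<in>sphere 0 1. (-c) + (-b1) * Re z + (-b2) * Im z \<ge> \<phi> z)" by force
    then have "- t \<in> {c + b1 * Re \<xi> + b2 * Im \<xi> | c b1 b2.
       \<forall>z\<in>sphere 0 1. c + b1 * Re z + b2 * Im z \<ge> \<phi> z}" by blast
    then show "t \<in> uminus ` {c + b1 * Re \<xi> + b2 * Im \<xi> | c b1 b2.
       \<forall>z\<in>sphere 0 1. c + b1 * Re z + b2 * Im z \<ge> \<phi> z}"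
      by (metis (no_types, lifting) image_eqI minus_minus)
  qed
  then show ?thesis unfolding phi_plus_def phi_minus_def Inf_real_def by simp
qed

lemma uminus_image_iff: "\<sigma> \<in> uminus ` S \<longleftrightarrow> - \<sigma> \<in> (S :: mink set)"
  by (metis image_eqI minus_minus imageE)

lemma Sigma_plus_eq: "Sigma_plus X \<xi> = uminus ` SigM (\<lambda>z. - support_fn X z) \<xi>"
  by (rule set_eqI) (simp add: uminus_image_iff Sigma_plus_def SigM_def mink_inner_lift phi_plus_eq
      Aff_linear(4) minus_le_iff le_minus_iff; auto)

lemma E_minus_eq: "E_minus X = EM (support_fn X)"
  by (simp add: fun_eq_iff E_minus_def EM_def E_field_eq Sigma_minus_SigM)

lemma seg_mid_uminus:
  assumes "S = closed_segment a (b::mink)"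
  shows "seg_mid (uminus ` S) = - seg_mid S"
proof -
  have "uminus ` S = closed_segment (-a) (-b)"
    using assms closed_segment_linear_image[of uminus a b] by (simp add: linear_uminus)
  then have "seg_mid (uminus ` S) = midpoint (-a) (-b)" by (rule seg_mid_eq)
  also have "\<dots> = - midpoint a b" by (simp add: midpoint_def algebra_simps)
  also have "\<dots> = - seg_mid S" using seg_mid_eq[OF assms] by simp
  finally show ?thesis .
qed

lemma singleton_uminus: "(\<exists>\<sigma>. uminus ` S = {\<sigma>}) \<longleftrightarrow> (\<exists>\<sigma>. S = {\<sigma> :: mink})"
proof
  assume "\<exists>\<sigma>. uminus ` S = {\<sigma>}"
  then obtain \<sigma> where "uminus ` S = {\<sigma>}" by blast
  then have "uminus ` uminus ` S = {- \<sigma>}" by simp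
  then have "S = {- \<sigma>}" by (simp add: image_image)
  then show "\<exists>\<sigma>. S = {\<sigma>}" by blast
next
  assume "\<exists>\<sigma>. S = {\<sigma>}"
  then show "\<exists>\<sigma>. uminus ` S = {\<sigma>}" by auto
qed

theorem lemma4p11:
  fixes X :: "complex \<Rightarrow> complex" and \<eta> :: complex
  assumes "is_vector_field_S1 X"
    and "continuous_on (sphere 0 1) X"
    and "\<eta> \<in> ball 0 1"
  shows "(isCont (E_minus X) \<eta> \<longleftrightarrow> (\<exists>\<sigma>. Sigma_minus X \<eta> = {\<sigma>}))
       \<and> (isCont (E_plus X) \<eta> \<longleftrightarrow> (\<exists>\<sigma>. Sigma_plus X \<eta> = {\<sigma>}))"
proof
  obtain M where M: "\<forall>z\<in>sphere 0 1. \<bar>support_fn X z\<bar> \<le> M"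
    using support_bounded[OF assms(2)] by blast
  show "isCont (E_minus X) \<eta> \<longleftrightarrow> (\<exists>\<sigma>. Sigma_minus X \<eta> = {\<sigma>})"
    unfolding E_minus_eq Sigma_minus_SigM using main_minus[OF M assms(3)] .
  define \<psi> where "\<psi> z = - support_fn X z" for z
  have M2: "\<forall>z\<in>sphere 0 1. \<bar>\<psi> z\<bar> \<le> M" using M by (simp add: \<psi>_def)
  have ev: "eventually (\<lambda>\<xi>. E_plus X \<xi> = - EM \<psi> \<xi>) (nhds \<eta>)"
  proof -
    have "eventually (\<lambda>\<xi>. \<xi> \<in> ball 0 1) (nhds \<eta>)"
      using assms(3) by (intro eventually_nhds_in_open) auto
    moreover have "E_plus X \<xi> = - EM \<psi> \<xi>" if xb: "\<xi> \<in> ball 0 1" for \<xi>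
    proof -
      obtain a b where ab: "SigM \<psi> \<xi> = closed_segment a b" using SigM_segment[OF M2 xb] by blast
      have "E_plus X \<xi> = EF (seg_mid (uminus ` SigM \<psi> \<xi>)) \<xi>"
        by (simp add: E_plus_def E_field_eq Sigma_plus_eq \<psi>_def[abs_def])
      also have "\<dots> = EF (- seg_mid (SigM \<psi> \<xi>)) \<xi>" using seg_mid_uminus[OF ab] by simp
      also have "\<dots> = - EM \<psi> \<xi>" by (simp add: EF_neg EM_def)
      finally show ?thesis .
    qed
    ultimately show ?thesis by (rule eventually_mono)
  qed
  have "isCont (E_plus X) \<eta> \<longleftrightarrow> isCont (\<lambda>\<xi>. - EM \<psi> \<xi>) \<eta>" by (rule isCont_cong[OF ev])
  also have "\<dots> \<longleftrightarrow> isCont (EM \<psi>) \<eta>"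
  proof
    assume "isCont (\<lambda>\<xi>. - EM \<psi> \<xi>) \<eta>"
    then have "isCont (\<lambda>\<xi>. - (- EM \<psi> \<xi>)) \<eta>" by (rule isCont_minus)
    then show "isCont (EM \<psi>) \<eta>" by simp
  next
    assume "isCont (EM \<psi>) \<eta>"
    then show "isCont (\<lambda>\<xi>. - EM \<psi> \<xi>) \<eta>" by (rule isCont_minus)
  qed
  also have "\<dots> \<longleftrightarrow> (\<exists>\<sigma>. SigM \<psi> \<eta> = {\<sigma>})" by (rule main_minus[OF M2 assms(3)])
  also have "\<dots> \<longleftrightarrow> (\<exists>\<sigma>. Sigma_plus X \<eta> = {\<sigma>})"
  proof -
    have sp: "Sigma_plus X \<eta> = uminus ` SigM \<psi> \<eta>" by (simp add: Sigma_plus_eq \<psi>_def[abs_def])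
    show ?thesis by (simp only: sp singleton_uminus)
  qed
  finally show "isCont (E_plus X) \<eta> \<longleftrightarrow> (\<exists>\<sigma>. Sigma_plus X \<eta> = {\<sigma>})" .
qed


end
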